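(* Let $(X,\mathcal{E})$ be an unbounded discrete ballean that is relatively maximal, and let $p,q$ be distinct ultrafilters from $X^\sharp$. Then $f^\beta(p)\neq q$ for every map $f:X\to X$ such that for every bounded set $B$ of $(X,\mathcal{E})$ both $f(B)$ and $f^{-1}(B)$ are bounded.
   Context: A ballean $(X,\mathcal{E})$ is a set with a coarse structure. $E[x]=\{y:(x,y)\in E\}$. $Y$ is bounded if $Y\subseteq E[x]$ for some $x$ and $E\in\mathcal{E}$. The ballean is discrete if for every $E\in\mathcal{E}$ there is a bounded $B$ with $E[x]=\{x\}$ for all $x\in X\setminus B$. $X^\sharp$ is the set of ultrafilters on $X$ all of whose members are unbounded. For $f:X\to X$, $f^\beta(p)$ denotes the ultrafilter generated by $\{f(P):P\in p\}$. A ballean is relatively maximal if $\mathcal{E}$ is the largest coarse structure on $X$ whose bounded sets are exactly the bounded sets of $(X,\mathcal{E})$. *)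

theory Defs
  imports Main
begin

text \<open>The ambient set X is the whole type 'a. Entourages are subsets of 'a \<times> 'a.\<close>

definition coarse_structure :: "('a \<times> 'a) set set \<Rightarrow> bool" where
  "coarse_structure \<E> \<longleftrightarrow>
     (\<forall>E\<in>\<E>. Id \<subseteq> E) \<and> Id \<in> \<E> \<and>
     (\<forall>E\<in>\<E>. \<forall>F\<in>\<E>. E O F \<in> \<E>) \<and>
     (\<forall>E\<in>\<E>. E\<inverse> \<in> \<E>) \<and>
     (\<forall>E\<in>\<E>. \<forall>F. Id \<subseteq> F \<and> F \<subseteq> E \<longrightarrow> F \<in> \<E>) \<and>
     \<Union>\<E> = UNIV"

definition ball :: "('a \<times> 'a) set \<Rightarrow> 'a \<Rightarrow> 'a set" where
  "ball E x = {y. (x, y) \<in> E}"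

definition bounded_in :: "('a \<times> 'a) set set \<Rightarrow> 'a set \<Rightarrow> bool" where
  "bounded_in \<E> Y \<longleftrightarrow> (\<exists>x. \<exists>E\<in>\<E>. Y \<subseteq> ball E x)"

definition discrete_ballean :: "('a \<times> 'a) set set \<Rightarrow> bool" where
  "discrete_ballean \<E> \<longleftrightarrow>
     (\<forall>E\<in>\<E>. \<exists>B. bounded_in \<E> B \<and> (\<forall>x. x \<notin> B \<longrightarrow> ball E x = {x}))"

definition relatively_maximal :: "('a \<times> 'a) set set \<Rightarrow> bool" where
  "relatively_maximal \<E> \<longleftrightarrow>
     (\<forall>\<E>'. coarse_structure \<E>' \<and> (\<forall>Y. bounded_in \<E>' Y \<longleftrightarrow> bounded_in \<E> Y) \<longrightarrow> \<E>' \<subseteq> \<E>)"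

definition ultrafilter_on :: "'a set set \<Rightarrow> bool" where
  "ultrafilter_on p \<longleftrightarrow>
     {} \<notin> p \<and> UNIV \<in> p \<and>
     (\<forall>A B. A \<in> p \<and> A \<subseteq> B \<longrightarrow> B \<in> p) \<and>
     (\<forall>A\<in>p. \<forall>B\<in>p. A \<inter> B \<in> p) \<and>
     (\<forall>A. A \<in> p \<or> - A \<in> p)"

definition sharp :: "('a \<times> 'a) set set \<Rightarrow> 'a set set set" where
  "sharp \<E> = {p. ultrafilter_on p \<and> (\<forall>P\<in>p. \<not> bounded_in \<E> P)}"

definition beta_ext :: "('a \<Rightarrow> 'b) \<Rightarrow> 'a set set \<Rightarrow> 'b set set" where
  "beta_ext f p = {Q. \<exists>P\<in>p. f ` P \<subseteq> Q}"

end

theory Submission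
  imports Defs
begin

lemma bsub: "bounded_in \<E> Y \<Longrightarrow> Z \<subseteq> Y \<Longrightarrow> bounded_in \<E> Z"
  unfolding bounded_in_def by blast

lemma csD1: "coarse_structure \<E> \<Longrightarrow> \<forall>E\<in>\<E>. Id \<subseteq> E"
  unfolding coarse_structure_def by (elim conjE) assumption

lemma csD2: "coarse_structure \<E> \<Longrightarrow> Id \<in> \<E>"
  unfolding coarse_structure_def by (elim conjE) assumption

lemma csD3: "coarse_structure \<E> \<Longrightarrow> \<forall>E\<in>\<E>. \<forall>F\<in>\<E>. E O F \<in> \<E>"
  unfolding coarse_structure_def by (elim conjE) assumption

lemma csD4: "coarse_structure \<E> \<Longrightarrow> \<forall>E\<in>\<E>. E\<inverse> \<in> \<E>"
  unfolding coarse_structure_def by (elim conjE) assumption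

lemma csD5: "coarse_structure \<E> \<Longrightarrow> \<Union>\<E> = UNIV"
  unfolding coarse_structure_def by (elim conjE) assumption

lemmas csD = csD1 csD2 csD3 csD4 csD5

lemma cs_Id: "coarse_structure \<E> \<Longrightarrow> E \<in> \<E> \<Longrightarrow> Id \<subseteq> E"
  using csD(1) by blast

lemma cs_comp: "coarse_structure \<E> \<Longrightarrow> E \<in> \<E> \<Longrightarrow> F \<in> \<E> \<Longrightarrow> E O F \<in> \<E>"
  using csD(3) by blast

lemma cs_inv: "coarse_structure \<E> \<Longrightarrow> E \<in> \<E> \<Longrightarrow> E\<inverse> \<in> \<E>"
  using csD(4) by blast

lemma cs_pair: "coarse_structure \<E> \<Longrightarrow> \<exists>H\<in>\<E>. (x,y) \<in> H"
proof -
  assume "coarse_structure \<E>"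
  then have "(x,y) \<in> \<Union>\<E>" using csD(5)[of \<E>] by simp
  then show ?thesis by blast
qed

lemma bun:
  assumes c: "coarse_structure \<E>" and "bounded_in \<E> Y" "bounded_in \<E> Z"
  shows "bounded_in \<E> (Y \<union> Z)"
proof -
  obtain x E where E: "E \<in> \<E>" "Y \<subseteq> ball E x" using assms unfolding bounded_in_def by blast
  obtain y F where F: "F \<in> \<E>" "Z \<subseteq> ball F y" using assms unfolding bounded_in_def by blast
  obtain H where H: "H \<in> \<E>" "(x,y) \<in> H" using cs_pair[OF c] by blast
  have HF: "H O F \<in> \<E>" using cs_comp[OF c H(1) F(1)] .
  have M: "E O (H O F) \<in> \<E>" using cs_comp[OF c E(1) HF] .
  have IdHF: "Id \<subseteq> H O F" using cs_Id[OF c HF] .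
  have IdE: "Id \<subseteq> E" using cs_Id[OF c E(1)] .
  have "Y \<subseteq> ball (E O (H O F)) x"
  proof
    fix z assume "z \<in> Y"
    then have "(x,z) \<in> E" using E(2) unfolding ball_def by blast
    moreover have "(z,z) \<in> H O F" using IdHF by blast
    ultimately show "z \<in> ball (E O (H O F)) x" unfolding ball_def by blast
  qed
  moreover have "Z \<subseteq> ball (E O (H O F)) x"
  proof
    fix z assume "z \<in> Z"
    then have "(y,z) \<in> F" using F(2) unfolding ball_def by blast
    then have "(x,z) \<in> H O F" using H(2) by blast
    moreover have "(x,x) \<in> E" using IdE by blast
    ultimately show "z \<in> ball (E O (H O F)) x" unfolding ball_def by blast
  qed
  ultimately show ?thesis using M unfolding bounded_in_def by blast
qed

lemma bimg:
  assumes c: "coarse_structure \<E>" and E: "E \<in> \<E>" and "bounded_in \<E> Y"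
  shows "bounded_in \<E> (E `` Y)"
proof -
  obtain x F where F: "F \<in> \<E>" "Y \<subseteq> ball F x" using assms unfolding bounded_in_def by blast
  have "F O E \<in> \<E>" using cs_comp[OF c F(1) E] .
  moreover have "E `` Y \<subseteq> ball (F O E) x" using F(2) unfolding ball_def by blast
  ultimately show ?thesis unfolding bounded_in_def by blast
qed

lemma cs_IdIn: "coarse_structure \<E> \<Longrightarrow> Id \<in> \<E>"
  by (rule csD(2))

lemma bsing: "coarse_structure \<E> \<Longrightarrow> bounded_in \<E> {x}"
proof -
  assume "coarse_structure \<E>"
  then have "Id \<in> \<E>" by (rule cs_IdIn)
  moreover have "{x} \<subseteq> ball Id x" unfolding ball_def by simp
  ultimately show ?thesis unfolding bounded_in_def by blast
qed

definition Emax :: "('a \<times> 'a) set set \<Rightarrow> ('a \<times> 'a) set set" where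
  "Emax \<E> = {E. Id \<subseteq> E \<and> (\<forall>Y. bounded_in \<E> Y \<longrightarrow> bounded_in \<E> (E``Y) \<and> bounded_in \<E> (E\<inverse>``Y))}"

lemma EmaxI: "Id \<subseteq> E \<Longrightarrow> (\<And>Y. bounded_in \<E> Y \<Longrightarrow> bounded_in \<E> (E``Y)) \<Longrightarrow>
   (\<And>Y. bounded_in \<E> Y \<Longrightarrow> bounded_in \<E> (E\<inverse>``Y)) \<Longrightarrow> E \<in> Emax \<E>"
  unfolding Emax_def by blast

lemma EmaxD: "E \<in> Emax \<E> \<Longrightarrow> Id \<subseteq> E"
  "E \<in> Emax \<E> \<Longrightarrow> bounded_in \<E> Y \<Longrightarrow> bounded_in \<E> (E``Y)"
  "E \<in> Emax \<E> \<Longrightarrow> bounded_in \<E> Y \<Longrightarrow> bounded_in \<E> (E\<inverse>``Y)"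
  unfolding Emax_def by blast+

lemma Emax_cs: "coarse_structure \<E> \<Longrightarrow> coarse_structure (Emax \<E>)"
proof -
  assume c: "coarse_structure \<E>"
  have Id: "Id \<in> Emax \<E>" by (rule EmaxI) auto
  have comp: "E O F \<in> Emax \<E>" if "E \<in> Emax \<E>" "F \<in> Emax \<E>" for E F
  proof (rule EmaxI)
    show "Id \<subseteq> E O F" using EmaxD(1)[OF that(1)] EmaxD(1)[OF that(2)] by blast
    show "bounded_in \<E> ((E O F) `` Y)" if "bounded_in \<E> Y" for Y
      unfolding relcomp_Image using EmaxD(2) that \<open>E \<in> Emax \<E>\<close> \<open>F \<in> Emax \<E>\<close> by blast
    show "bounded_in \<E> ((E O F)\<inverse> `` Y)" if "bounded_in \<E> Y" for Y
      unfolding converse_relcomp relcomp_Image using EmaxD(3) that \<open>E \<in> Emax \<E>\<close> \<open>F \<in> Emax \<E>\<close> by blast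
  qed
  have inv: "E\<inverse> \<in> Emax \<E>" if "E \<in> Emax \<E>" for E
  proof (rule EmaxI)
    show "Id \<subseteq> E\<inverse>" using EmaxD(1)[OF that] by blast
    show "bounded_in \<E> (E\<inverse> `` Y)" if "bounded_in \<E> Y" for Y using EmaxD(3) that \<open>E \<in> Emax \<E>\<close> by blast
    show "bounded_in \<E> ((E\<inverse>)\<inverse> `` Y)" if "bounded_in \<E> Y" for Y using EmaxD(2) that \<open>E \<in> Emax \<E>\<close> by simp
  qed
  have sub: "F \<in> Emax \<E>" if "E \<in> Emax \<E>" "Id \<subseteq> F" "F \<subseteq> E" for E F
  proof (rule EmaxI)
    show "Id \<subseteq> F" by fact
    show "bounded_in \<E> (F `` Y)" if "bounded_in \<E> Y" for Y
      using EmaxD(2)[OF \<open>E \<in> Emax \<E>\<close> that] bsub Image_mono[OF \<open>F \<subseteq> E\<close> order_refl] by blast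
    show "bounded_in \<E> (F\<inverse> `` Y)" if "bounded_in \<E> Y" for Y
      using EmaxD(3)[OF \<open>E \<in> Emax \<E>\<close> that] bsub Image_mono[OF converse_mono[THEN iffD2, OF \<open>F \<subseteq> E\<close>] order_refl] by blast
  qed
  have pr: "Id \<union> {(x,y)} \<in> Emax \<E>" for x y
  proof (rule EmaxI)
    show "Id \<subseteq> Id \<union> {(x,y)}" by blast
    show "bounded_in \<E> ((Id \<union> {(x,y)}) `` Y)" if "bounded_in \<E> Y" for Y
    proof -
      have "bounded_in \<E> (Y \<union> {y})" using bun[OF c that bsing[OF c]] .
      moreover have "(Id \<union> {(x,y)}) `` Y \<subseteq> Y \<union> {y}" by blast
      ultimately show ?thesis by (rule bsub)
    qed
    show "bounded_in \<E> ((Id \<union> {(x,y)})\<inverse> `` Y)" if "bounded_in \<E> Y" for Y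
    proof -
      have "bounded_in \<E> (Y \<union> {x})" using bun[OF c that bsing[OF c]] .
      moreover have "(Id \<union> {(x,y)})\<inverse> `` Y \<subseteq> Y \<union> {x}" by blast
      ultimately show ?thesis by (rule bsub)
    qed
  qed
  have un: "\<Union>(Emax \<E>) = UNIV"
  proof -
    have "(x,y) \<in> \<Union>(Emax \<E>)" for x y using pr[of x y] by blast
    then show ?thesis by auto
  qed
  show ?thesis unfolding coarse_structure_def
  proof (intro conjI)
    show "\<forall>E\<in>Emax \<E>. Id \<subseteq> E" using EmaxD(1) by blast
    show "\<forall>E\<in>Emax \<E>. \<forall>F\<in>Emax \<E>. E O F \<in> Emax \<E>" using comp by blast
    show "\<forall>E\<in>Emax \<E>. E\<inverse> \<in> Emax \<E>" using inv by blast
    show "\<forall>E\<in>Emax \<E>. \<forall>F. Id \<subseteq> F \<and> F \<subseteq> E \<longrightarrow> F \<in> Emax \<E>" using sub by blast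
  qed (rule Id, rule un)
qed

lemma Emax_bounded:
  assumes c: "coarse_structure \<E>"
  shows "bounded_in (Emax \<E>) Y \<longleftrightarrow> bounded_in \<E> Y"
proof
  assume "bounded_in (Emax \<E>) Y"
  then obtain x E where E: "E \<in> Emax \<E>" "Y \<subseteq> ball E x" unfolding bounded_in_def by blast
  have "bounded_in \<E> (E `` {x})" using E(1) bsing[OF c] unfolding Emax_def by blast
  moreover have "ball E x = E `` {x}" unfolding ball_def by auto
  ultimately show "bounded_in \<E> Y" using E(2) bsub by metis
next
  assume b: "bounded_in \<E> Y"
  have "\<E> \<subseteq> Emax \<E>"
    unfolding Emax_def using cs_Id[OF c] bimg[OF c] cs_inv[OF c] by blast
  then show "bounded_in (Emax \<E>) Y" using b unfolding bounded_in_def by blast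
qed

lemma ufD1: "ultrafilter_on p \<Longrightarrow> {} \<notin> p"
  unfolding ultrafilter_on_def by (elim conjE) assumption
lemma ufD2: "ultrafilter_on p \<Longrightarrow> \<forall>A\<in>p. \<forall>B\<in>p. A \<inter> B \<in> p"
  unfolding ultrafilter_on_def by (elim conjE) assumption
lemma ufD3: "ultrafilter_on p \<Longrightarrow> \<forall>A. A \<in> p \<or> - A \<in> p"
  unfolding ultrafilter_on_def by (elim conjE) assumption

theorem proposition3:
  fixes \<E> :: "('a \<times> 'a) set set"
  assumes "coarse_structure \<E>"
    and "\<not> bounded_in \<E> (UNIV :: 'a set)"
    and "discrete_ballean \<E>"
    and "relatively_maximal \<E>"
    and "p \<in> sharp \<E>" and "q \<in> sharp \<E>" and "p \<noteq> q"
  shows "\<forall>f :: 'a \<Rightarrow> 'a.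
           (\<forall>B. bounded_in \<E> B \<longrightarrow> bounded_in \<E> (f ` B) \<and> bounded_in \<E> (f -` B))
           \<longrightarrow> beta_ext f p \<noteq> q"
proof (intro allI impI notI)
  fix f :: "'a \<Rightarrow> 'a"
  assume fb: "\<forall>B. bounded_in \<E> B \<longrightarrow> bounded_in \<E> (f ` B) \<and> bounded_in \<E> (f -` B)"
    and eq: "beta_ext f p = q"
  note c = assms(1)
  define G where "G = Id \<union> {(x, f x) | x. True}"
  have G1: "G `` Y = Y \<union> f ` Y" for Y unfolding G_def by auto
  have G2: "G\<inverse> `` Y = Y \<union> f -` Y" for Y unfolding G_def by auto
  have "G \<in> Emax \<E>"
  proof (rule EmaxI)
    show "Id \<subseteq> G" unfolding G_def by blast
    show "bounded_in \<E> (G `` Y)" if "bounded_in \<E> Y" for Y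
      unfolding G1 using bun[OF c that] fb that by blast
    show "bounded_in \<E> (G\<inverse> `` Y)" if "bounded_in \<E> Y" for Y
      unfolding G2 using bun[OF c that] fb that by blast
  qed
  moreover have "Emax \<E> \<subseteq> \<E>"
  proof -
    have "\<forall>Y. bounded_in (Emax \<E>) Y \<longleftrightarrow> bounded_in \<E> Y" using Emax_bounded[OF c] by blast
    moreover have "coarse_structure (Emax \<E>) \<and> (\<forall>Y. bounded_in (Emax \<E>) Y \<longleftrightarrow> bounded_in \<E> Y) \<longrightarrow> Emax \<E> \<subseteq> \<E>"
      using assms(4) unfolding relatively_maximal_def by (rule spec)
    ultimately show ?thesis using Emax_cs[OF c] by blast
  qed
  ultimately have GE: "G \<in> \<E>" by blast
  then obtain B where B: "bounded_in \<E> B" "\<forall>x. x \<notin> B \<longrightarrow> ball G x = {x}"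
    using assms(3) unfolding discrete_ballean_def by blast
  have fx: "f x = x" if "x \<notin> B" for x
  proof -
    have "f x \<in> ball G x" unfolding ball_def G_def by auto
    then show ?thesis using B(2) that by auto
  qed
  have up: "ultrafilter_on p" "ultrafilter_on q" using assms(5,6) unfolding sharp_def by auto
  have "B \<notin> p" using assms(5) B(1) unfolding sharp_def by auto
  then have nB: "- B \<in> p" using ufD3[OF up(1)] by blast
  have pq: "p \<subseteq> q"
  proof
    fix A assume A: "A \<in> p"
    have "A \<inter> - B \<in> p" using A nB ufD2[OF up(1)] by blast
    moreover have "f ` (A \<inter> - B) \<subseteq> A" using fx by auto
    ultimately show "A \<in> q" using eq unfolding beta_ext_def by blast
  qed
  have "q \<subseteq> p"
  proof
    fix A assume A: "A \<in> q"
    show "A \<in> p"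
    proof (rule ccontr)
      assume "A \<notin> p"
      then have "- A \<in> q" using ufD3[OF up(1)] pq by blast
      then have "A \<inter> - A \<in> q" using A ufD2[OF up(2)] by blast
      then show False using ufD1[OF up(2)] by simp
    qed
  qed
  with pq assms(7) show False by blast
qed

end
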